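(* Let $G$ be a cop-win graph of corner rank $\alpha\ge2$. No vertex of corner rank $\alpha-1$ is adjacent to every vertex of corner rank $\alpha-1$.
   Context: All graphs are finite, nonempty, and reflexive (every vertex has a loop, so each vertex is adjacent to itself). $N[v]$ is the closed neighborhood of $v$ (including $v$). For distinct $v,w$, $w$ strictly corners $v$ if $N[v]\subsetneq N[w]$; $v$ is then a strict corner. Corner ranking: set $G^{(1)}=G$, $k=1$. If $G^{(k)}$ is a clique, give all its vertices rank $k$ and stop. Else if $G^{(k)}$ has no strict corners, give all its vertices rank $\infty$ and stop. Else give every strict corner of $G^{(k)}$ rank $k$, delete them to get $G^{(k+1)}$ (induced subgraph), increase $k$ and repeat. The corner rank of $G$ is the largest rank of a vertex; cop-win graphs are exactly those of finite corner rank. *)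

theory Defs
  imports Main "HOL-Library.Extended_Nat"
begin

definition reflexive_graph :: "'a set \<Rightarrow> ('a \<Rightarrow> 'a \<Rightarrow> bool) \<Rightarrow> bool" where
  "reflexive_graph V E \<longleftrightarrow> finite V \<and> V \<noteq> {} \<and> (\<forall>v\<in>V. E v v)
     \<and> (\<forall>v\<in>V. \<forall>w\<in>V. E v w \<longleftrightarrow> E w v)"

definition closed_nbhd :: "('a \<Rightarrow> 'a \<Rightarrow> bool) \<Rightarrow> 'a set \<Rightarrow> 'a \<Rightarrow> 'a set" where
  "closed_nbhd E S v = {w \<in> S. E v w}"

definition strict_corners :: "('a \<Rightarrow> 'a \<Rightarrow> bool) \<Rightarrow> 'a set \<Rightarrow> 'a set" where
  "strict_corners E S = {v \<in> S. \<exists>w\<in>S. w \<noteq> v \<and> closed_nbhd E S v \<subset> closed_nbhd E S w}"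

definition is_clique :: "('a \<Rightarrow> 'a \<Rightarrow> bool) \<Rightarrow> 'a set \<Rightarrow> bool" where
  "is_clique E S \<longleftrightarrow> (\<forall>u\<in>S. \<forall>w\<in>S. E u w)"

text \<open>corner_stage V E k is G^(k+1) (0-indexed).  Once a stage is a clique or has
  no strict corners, it stays constant, so we may iterate unconditionally.\<close>
fun corner_stage :: "'a set \<Rightarrow> ('a \<Rightarrow> 'a \<Rightarrow> bool) \<Rightarrow> nat \<Rightarrow> 'a set" where
  "corner_stage V E 0 = V"
| "corner_stage V E (Suc k) = corner_stage V E k - strict_corners E (corner_stage V E k)"

definition assigned_at :: "'a set \<Rightarrow> ('a \<Rightarrow> 'a \<Rightarrow> bool) \<Rightarrow> 'a \<Rightarrow> nat \<Rightarrow> bool" where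
  "assigned_at V E v k \<longleftrightarrow>
     (if is_clique E (corner_stage V E k) then v \<in> corner_stage V E k
      else v \<in> strict_corners E (corner_stage V E k))"

definition corner_rank_of :: "'a set \<Rightarrow> ('a \<Rightarrow> 'a \<Rightarrow> bool) \<Rightarrow> 'a \<Rightarrow> enat" where
  "corner_rank_of V E v =
     (if \<exists>k. assigned_at V E v k then enat (Suc (LEAST k. assigned_at V E v k)) else \<infinity>)"

definition corner_rank :: "'a set \<Rightarrow> ('a \<Rightarrow> 'a \<Rightarrow> bool) \<Rightarrow> enat" where
  "corner_rank V E = Max (corner_rank_of V E ` V)"

definition cop_win :: "'a set \<Rightarrow> ('a \<Rightarrow> 'a \<Rightarrow> bool) \<Rightarrow> bool" where
  "cop_win V E \<longleftrightarrow> corner_rank V E \<noteq> \<infinity>"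

end

theory Submission
  imports Defs
begin

lemma stage_sub: "corner_stage V E (Suc k) \<subseteq> corner_stage V E k"
  by simp

lemma stage_mono: "j \<le> k \<Longrightarrow> corner_stage V E k \<subseteq> corner_stage V E j"
proof (induction k rule: dec_induct)
  case base then show ?case by (rule subset_refl)
next
  case (step n) show ?case using stage_sub[of V E n] step.IH by (rule subset_trans)
qed

lemma stage_V: "corner_stage V E k \<subseteq> V"
  using stage_mono[of 0 k V E] by simp

lemma sc_sub: "strict_corners E S \<subseteq> S"
  unfolding strict_corners_def by auto

lemma not_sc_exists:
  assumes "finite S" "T \<subseteq> S" "T \<noteq> {}"
    and up: "\<And>t w. t \<in> T \<Longrightarrow> w \<in> S \<Longrightarrow> closed_nbhd E S t \<subset> closed_nbhd E S w \<Longrightarrow> w \<in> T"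
  shows "\<exists>u\<in>T. u \<notin> strict_corners E S"
proof -
  define f where "f t = card (closed_nbhd E S t)" for t
  have fT: "finite T" using assms(1,2) finite_subset by blast
  define m where "m = Max (f ` T)"
  have "m \<in> f ` T" unfolding m_def using fT assms(3) by (intro Max_in) auto
  then obtain u where u: "u \<in> T" "f u = m" by blast
  have le: "\<And>t. t \<in> T \<Longrightarrow> f t \<le> m" using fT unfolding m_def by simp
  have "u \<notin> strict_corners E S"
  proof
    assume "u \<in> strict_corners E S"
    then obtain w where w: "w \<in> S" "closed_nbhd E S u \<subset> closed_nbhd E S w"
      unfolding strict_corners_def by auto
    have "w \<in> T" using up[OF u(1) w] .
    have fin: "finite (closed_nbhd E S w)" using assms(1) unfolding closed_nbhd_def by simp
    have "f u < f w" unfolding f_def using psubset_card_mono[OF fin w(2)] .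
    with le[OF \<open>w \<in> T\<close>] u(2) show False by simp
  qed
  with u show ?thesis by blast
qed

lemma not_assigned_early:
  assumes "\<forall>j<m. \<not> is_clique E (corner_stage V E j)" "z \<in> corner_stage V E m" "j < m"
  shows "\<not> assigned_at V E z j"
proof -
  have "z \<in> corner_stage V E (Suc j)" using assms(2,3) stage_mono[of "Suc j" m V E] by auto
  then have "z \<notin> strict_corners E (corner_stage V E j)" by simp
  then show ?thesis using assms(1,3) unfolding assigned_at_def by simp
qed

lemma rank_eq:
  assumes "assigned_at V E z m" "\<And>j. j < m \<Longrightarrow> \<not> assigned_at V E z j"
  shows "corner_rank_of V E z = enat (Suc m)"
proof -
  have "(LEAST k. assigned_at V E z k) = m"
    by (rule Least_equality) (use assms not_less in auto)
  then show ?thesis using assms(1) unfolding corner_rank_of_def by auto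
qed

lemma ne_imp_nonempty_helper: "x \<in> A \<Longrightarrow> A \<noteq> {}" by auto

theorem lemma3p18:
  fixes V :: "'a set" and E :: "'a \<Rightarrow> 'a \<Rightarrow> bool" and \<alpha> :: nat
  assumes "reflexive_graph V E"
    and "cop_win V E"
    and "corner_rank V E = enat \<alpha>"
    and "\<alpha> \<ge> 2"
  shows "\<not> (\<exists>v\<in>V. corner_rank_of V E v = enat (\<alpha> - 1) \<and>
            (\<forall>w\<in>V. corner_rank_of V E w = enat (\<alpha> - 1) \<longrightarrow> E v w))"
proof
  assume "\<exists>v\<in>V. corner_rank_of V E v = enat (\<alpha> - 1) \<and>
            (\<forall>w\<in>V. corner_rank_of V E w = enat (\<alpha> - 1) \<longrightarrow> E v w)"
  then obtain v where vV: "v \<in> V" and rv: "corner_rank_of V E v = enat (\<alpha> - 1)"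
    and adj: "\<And>w. w \<in> V \<Longrightarrow> corner_rank_of V E w = enat (\<alpha> - 1) \<Longrightarrow> E v w" by blast
  define k where "k = \<alpha> - 2"
  have ak: "\<alpha> = Suc (Suc k)" "\<alpha> - 1 = Suc k" using assms(4) unfolding k_def by auto
  let ?S = "corner_stage V E"
  have finV: "finite V" and neV: "V \<noteq> {}"
    and sym: "\<And>x y. x \<in> V \<Longrightarrow> y \<in> V \<Longrightarrow> E x y \<longleftrightarrow> E y x"
    using assms(1) unfolding reflexive_graph_def by auto
  have finS: "\<And>j. finite (?S j)" by (rule finite_subset[OF stage_V finV])
  have mx: "Max (corner_rank_of V E ` V) = enat \<alpha>" using assms(3) unfolding corner_rank_def .
  have "Max (corner_rank_of V E ` V) \<in> corner_rank_of V E ` V"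
    using finV neV by (intro Max_in) auto
  then obtain x where xV: "x \<in> V" and rx: "corner_rank_of V E x = enat \<alpha>"
    unfolding mx by (rule imageE) metis
  have rle: "\<And>y. y \<in> V \<Longrightarrow> corner_rank_of V E y \<le> enat \<alpha>"
  proof -
    fix y assume "y \<in> V"
    then have "corner_rank_of V E y \<le> Max (corner_rank_of V E ` V)"
      using finV by (intro Max_ge) auto
    then show "corner_rank_of V E y \<le> enat \<alpha>" using mx by simp
  qed
  have ex_assigned: "\<And>y. y \<in> V \<Longrightarrow> \<exists>m. assigned_at V E y m \<and> m \<le> Suc k \<and>
       (\<forall>j<m. \<not> assigned_at V E y j)"
  proof -
    fix y assume yV: "y \<in> V"
    have ex: "\<exists>m. assigned_at V E y m"
    proof (rule ccontr)
      assume "\<not> ?thesis"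
      then have "corner_rank_of V E y = \<infinity>" unfolding corner_rank_of_def by simp
      with rle[OF yV] show False by simp
    qed
    define m where "m = (LEAST m. assigned_at V E y m)"
    have am: "assigned_at V E y m" using LeastI_ex[OF ex] unfolding m_def .
    have "corner_rank_of V E y = enat (Suc m)" using ex unfolding corner_rank_of_def m_def by simp
    with rle[OF yV] ak have "m \<le> Suc k" by simp
    moreover have "\<forall>j<m. \<not> assigned_at V E y j" using not_less_Least[of _ "assigned_at V E y"] unfolding m_def by blast
    ultimately show "?thesis y" using am by blast
  qed
  have xinfo: "assigned_at V E x (Suc k) \<and> (\<forall>j<Suc k. \<not> assigned_at V E x j)"
  proof -
    have ex: "\<exists>m. assigned_at V E x m"
      using rx unfolding corner_rank_of_def by (cases "\<exists>m. assigned_at V E x m") auto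
    then have "enat (Suc (LEAST m. assigned_at V E x m)) = enat \<alpha>"
      using rx unfolding corner_rank_of_def by simp
    then have L: "(LEAST m. assigned_at V E x m) = Suc k" using ak by simp
    have "assigned_at V E x (Suc k)" using LeastI_ex[OF ex] L by simp
    moreover have "\<forall>j<Suc k. \<not> assigned_at V E x j"
      using not_less_Least[of _ "assigned_at V E x"] L by auto
    ultimately show ?thesis by blast
  qed
  have assigned_in: "y \<in> ?S m" if "assigned_at V E y m" for y m
    using that sc_sub[of E "?S m"] unfolding assigned_at_def by (auto split: if_splits)
  have xS: "x \<in> ?S (Suc k)" using xinfo assigned_in by blast
  have A: "\<forall>j<Suc k. \<not> is_clique E (?S j)"
  proof (intro allI impI notI)
    fix j assume j: "j < Suc k" and cl: "is_clique E (?S j)"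
    have "x \<in> ?S j" using xS stage_mono[of j "Suc k" V E] j by auto
    then have "assigned_at V E x j" using cl unfolding assigned_at_def by simp
    with xinfo j show False by blast
  qed
  have B: "is_clique E (?S (Suc k))"
  proof (rule ccontr)
    assume ncl: "\<not> is_clique E (?S (Suc k))"
    have all: "\<And>y. y \<in> ?S (Suc k) \<Longrightarrow> y \<in> strict_corners E (?S (Suc k))"
    proof -
      fix y assume yS: "y \<in> ?S (Suc k)"
      then have yV: "y \<in> V" by (rule subsetD[OF stage_V])
      obtain m where m: "assigned_at V E y m" "m \<le> Suc k" using ex_assigned[OF yV] by blast
      have "\<not> m < Suc k" using not_assigned_early[OF A yS] m(1) by blast
      then have "m = Suc k" using m(2) by simp
      then show "y \<in> strict_corners E (?S (Suc k))" using m(1) ncl unfolding assigned_at_def by simp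
    qed
    have "\<exists>u\<in>?S (Suc k). u \<notin> strict_corners E (?S (Suc k))"
    proof (rule not_sc_exists[OF finS[of "Suc k"] subset_refl])
      show "?S (Suc k) \<noteq> {}" using xS by (rule ne_imp_nonempty_helper)
    next
      fix t w assume "w \<in> ?S (Suc k)" then show "w \<in> ?S (Suc k)" .
    qed
    with all show False by blast
  qed
  have ncl: "\<not> is_clique E (?S k)" using A by simp
  have vk: "assigned_at V E v k"
  proof -
    have ex: "\<exists>m. assigned_at V E v m"
      using rv unfolding corner_rank_of_def by (cases "\<exists>m. assigned_at V E v m") auto
    then have "enat (Suc (LEAST m. assigned_at V E v m)) = enat (Suc k)"
      using rv ak unfolding corner_rank_of_def by simp
    then have "(LEAST m. assigned_at V E v m) = k" by simp
    then show ?thesis using LeastI_ex[OF ex] by simp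
  qed
  have vsc: "v \<in> strict_corners E (?S k)" using vk ncl unfolding assigned_at_def by simp
  then have vSk: "v \<in> ?S k" by (rule subsetD[OF sc_sub])
  obtain w where w: "w \<in> ?S k" "closed_nbhd E (?S k) v \<subset> closed_nbhd E (?S k) w"
    using vsc unfolding strict_corners_def by auto
  define D where "D = {u \<in> ?S k. closed_nbhd E (?S k) v \<subset> closed_nbhd E (?S k) u}"
  have "\<exists>u\<in>D. u \<notin> strict_corners E (?S k)"
  proof (rule not_sc_exists[OF finS[of k]])
    show "D \<subseteq> ?S k" unfolding D_def by (rule Collect_subset)
    show "D \<noteq> {}" using w unfolding D_def by (intro ne_imp_nonempty_helper[of w]) simp
    fix t w' assume tD: "t \<in> D" and w'S: "w' \<in> ?S k"
      and tw: "closed_nbhd E (?S k) t \<subset> closed_nbhd E (?S k) w'"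
    have "closed_nbhd E (?S k) v \<subset> closed_nbhd E (?S k) t" using tD unfolding D_def by simp
    then have "closed_nbhd E (?S k) v \<subset> closed_nbhd E (?S k) w'" using tw by (rule psubset_trans)
    then show "w' \<in> D" using w'S unfolding D_def by simp
  qed
  then obtain u where uD: "u \<in> D" and unsc: "u \<notin> strict_corners E (?S k)" by (rule bexE)
  have uS1: "u \<in> ?S (Suc k)" using uD unsc unfolding D_def by simp
  have uV: "u \<in> V" using uS1 by (rule subsetD[OF stage_V])
  have adjc: "\<And>z. z \<in> strict_corners E (?S k) \<Longrightarrow> E v z"
  proof -
    fix z assume zc: "z \<in> strict_corners E (?S k)"
    have zS: "z \<in> ?S k" using zc by (rule subsetD[OF sc_sub])
    have az: "assigned_at V E z k" using zc ncl unfolding assigned_at_def by simp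
    have Ak: "\<forall>j<k. \<not> is_clique E (?S j)" using A by simp
    have nae: "\<And>j. j < k \<Longrightarrow> \<not> assigned_at V E z j"
      using not_assigned_early[OF Ak zS] .
    have "corner_rank_of V E z = enat (Suc k)" by (rule rank_eq[OF az nae])
    moreover have "z \<in> V" using zS by (rule subsetD[OF stage_V])
    ultimately show "E v z" using adj[of z] ak by simp
  qed
  have Nu: "closed_nbhd E (?S k) u = ?S k"
  proof
    show "closed_nbhd E (?S k) u \<subseteq> ?S k" unfolding closed_nbhd_def by auto
  next
    show "?S k \<subseteq> closed_nbhd E (?S k) u"
    proof
      fix z assume zS: "z \<in> ?S k"
      show "z \<in> closed_nbhd E (?S k) u"
      proof (cases "z \<in> ?S (Suc k)")
        case True
        then show ?thesis using B uS1 zS unfolding is_clique_def closed_nbhd_def by auto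
      next
        case False
        then have "z \<in> strict_corners E (?S k)" using zS by simp
        then have "E v z" by (rule adjc)
        then have "z \<in> closed_nbhd E (?S k) v" using zS unfolding closed_nbhd_def by simp
        then show ?thesis using uD unfolding D_def by blast
      qed
    qed
  qed
  have Nv: "closed_nbhd E (?S k) v = ?S k"
  proof
    show "closed_nbhd E (?S k) v \<subseteq> ?S k" unfolding closed_nbhd_def by auto
  next
    show "?S k \<subseteq> closed_nbhd E (?S k) v"
    proof
      fix z assume zS: "z \<in> ?S k"
      have zV: "z \<in> V" using zS by (rule subsetD[OF stage_V])
      show "z \<in> closed_nbhd E (?S k) v"
      proof (cases "z \<in> ?S (Suc k)")
        case True
        then have znsc: "z \<notin> strict_corners E (?S k)" by simp
        have sub: "closed_nbhd E (?S k) z \<subseteq> closed_nbhd E (?S k) u"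
          using Nu unfolding closed_nbhd_def by auto
        have "closed_nbhd E (?S k) z = closed_nbhd E (?S k) u"
        proof (rule ccontr)
          assume "closed_nbhd E (?S k) z \<noteq> closed_nbhd E (?S k) u"
          with sub have ps: "closed_nbhd E (?S k) z \<subset> closed_nbhd E (?S k) u" by auto
          then have "z \<noteq> u" by auto
          then have "z \<in> strict_corners E (?S k)"
            using ps zS uS1 unfolding strict_corners_def by auto
          with znsc show False by simp
        qed
        then have "v \<in> closed_nbhd E (?S k) z" using Nu vSk by simp
        then have "E z v" unfolding closed_nbhd_def by simp
        then have "E v z" using sym[OF zV vV] by simp
        then show ?thesis using zS unfolding closed_nbhd_def by simp
      next
        case False
        then have "z \<in> strict_corners E (?S k)" using zS by simp
        then have "E v z" by (rule adjc)
        then show ?thesis using zS unfolding closed_nbhd_def by simp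
      qed
    qed
  qed
  show False using uD Nu Nv unfolding D_def by auto
qed

end
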